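(* Let $w\in\mathcal S_n$. Then $\Gamma(a_{\min},(x,y,z))=0$ and $\Gamma(a_{\max},(x,y,z))=1$ for every triple $(x,y,z)\in\mathrm T_w$.
   Context: Permutations are in one-line notation; $\mathrm{Des}(u)=\{i: u_i>u_{i+1}\}$. A word $a=a_1\cdots a_\ell$ with letters in $\{1,\dots,n-1\}$ acts on a word of length $n$ by successively swapping the entries in positions $a_j$ and $a_j+1$. $\mathrm R(w)$ is the set of reduced words of $w$ (words of length $\ell(w)$, the number of inversions, whose action on $12\cdots n$ yields $w$). The word $a_{\min}$ (resp. $a_{\max}$) is defined as follows: set $w^0=w$; for $j=0,1,\dots,\ell(w)-1$ let $i_j$ be the smallest (resp. largest) element of $\mathrm{Des}(w^j)$ and let $w^{j+1}$ be obtained from $w^j$ by swapping the entries in positions $i_j$ and $i_j+1$; then $w^{\ell(w)}=12\cdots n$ and $a_{\min}$ (resp. $a_{\max}$) is the reduced word $i_{\ell(w)-1}\cdots i_1 i_0$. For $a\in\mathrm R(w)$ and an inversion $(p,q)$ of $w$ ($p>q$, $p$ left of $q$ in $w$), $P_a(p,q)$ is the index of the step of $a$ at which $p$ and $q$ are swapped. $\mathrm T_w$ is the set of triples $(x,y,z)$, $x<y<z$, with $z,y,x$ appearing in this order in $w$. $\Gamma(a,(x,y,z))=1$ if $P_a(y,x)>P_a(z,y)$ and $0$ otherwise. *)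

theory Defs
  imports Main
begin

text \<open>Permutations of {1..n} in one-line notation are lists; positions are 1-based
  as in the paper, so the entry in position i of u is u ! (i - 1).\<close>

definition is_perm :: "nat \<Rightarrow> nat list \<Rightarrow> bool" where
  "is_perm n w \<longleftrightarrow> length w = n \<and> distinct w \<and> set w = {1..n}"

definition id_word :: "nat \<Rightarrow> nat list" where
  "id_word n = [1..<n+1]"

definition Des :: "nat list \<Rightarrow> nat set" where
  "Des u = {i. 1 \<le> i \<and> i < length u \<and> u ! (i - 1) > u ! i}"

definition swp :: "nat list \<Rightarrow> nat \<Rightarrow> nat list" where
  "swp u i = u[i - 1 := u ! i, i := u ! (i - 1)]"

definition act :: "nat list \<Rightarrow> nat list \<Rightarrow> nat list" where
  "act a u = foldl swp u a"

text \<open>Length = number of inversions.\<close>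
definition inv_count :: "nat list \<Rightarrow> nat" where
  "inv_count w = card {(i, j). i < j \<and> j < length w \<and> w ! i > w ! j}"

definition reduced_words :: "nat \<Rightarrow> nat list \<Rightarrow> nat list set" where
  "reduced_words n w = {a. length a = inv_count w \<and> set a \<subseteq> {1..n-1} \<and> act a (id_word n) = w}"

fun desc_seq :: "(nat set \<Rightarrow> nat) \<Rightarrow> nat list \<Rightarrow> nat \<Rightarrow> nat list" where
  "desc_seq sel u 0 = []"
| "desc_seq sel u (Suc k) = (let i = sel (Des u) in i # desc_seq sel (swp u i) k)"

definition a_min :: "nat list \<Rightarrow> nat list" where
  "a_min w = rev (desc_seq Min w (inv_count w))"

definition a_max :: "nat list \<Rightarrow> nat list" where
  "a_max w = rev (desc_seq Max w (inv_count w))"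

text \<open>P_a(p,q): the (1-based) index j of the step of a (acting on 12...n) at which
  p and q are swapped.\<close>
definition P :: "nat \<Rightarrow> nat list \<Rightarrow> nat \<Rightarrow> nat \<Rightarrow> nat" where
  "P n a p q = (LEAST j. 1 \<le> j \<and> j \<le> length a \<and>
      (let u = act (take (j - 1) a) (id_word n); k = a ! (j - 1)
       in {u ! (k - 1), u ! k} = {p, q}))"

definition T :: "nat list \<Rightarrow> (nat \<times> nat \<times> nat) set" where
  "T w = {(x, y, z). x < y \<and> y < z \<and>
     (\<exists>i j k. i < j \<and> j < k \<and> k < length w \<and> w ! i = z \<and> w ! j = y \<and> w ! k = x)}"

definition Gamma :: "nat \<Rightarrow> nat list \<Rightarrow> nat \<times> nat \<times> nat \<Rightarrow> nat" where
  "Gamma n a t = (case t of (x, y, z) \<Rightarrow> if P n a y x > P n a z y then 1 else 0)"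

end

theory Submission
  imports Defs "HOL-Library.Multiset"
begin

lemma swp_length[simp]: "length (swp u k) = length u" by (simp add: swp_def)

definition tau :: "nat \<Rightarrow> nat \<Rightarrow> nat" where
  "tau k i = (if i = k-1 then k else if i = k then k-1 else i)"

lemma swp_nth: "1 \<le> k \<Longrightarrow> k < length u \<Longrightarrow> i < length u \<Longrightarrow>
   swp u k ! i = u ! tau k i"
  by (auto simp: swp_def nth_list_update tau_def)

lemma tau_tau: "1 \<le> k \<Longrightarrow> tau k (tau k i) = i"
  by (auto simp: tau_def)

lemma tau_less: "1 \<le> k \<Longrightarrow> k < m \<Longrightarrow> i < m \<Longrightarrow> tau k i < m"
  by (auto simp: tau_def)

lemma tau_mono: "1 \<le> k \<Longrightarrow> i < j \<Longrightarrow> (i,j) \<noteq> (k-1,k) \<Longrightarrow> tau k i < tau k j"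
  by (auto simp: tau_def)

lemma swp_swp: "1 \<le> k \<Longrightarrow> k < length u \<Longrightarrow> swp (swp u k) k = u"
  by (rule nth_equalityI) (auto simp: swp_nth tau_tau tau_less)

lemma swp_mset: "1 \<le> k \<Longrightarrow> k < length u \<Longrightarrow> mset (swp u k) = mset u"
  unfolding swp_def by (rule mset_swap) auto

lemma swp_perm: "is_perm n u \<Longrightarrow> 1 \<le> k \<Longrightarrow> k < length u \<Longrightarrow> is_perm n (swp u k)"
  unfolding is_perm_def
  by (metis swp_length swp_mset mset_eq_setD mset_eq_imp_distinct_iff)

lemma Des_iff: "d \<in> Des u \<longleftrightarrow> 1 \<le> d \<and> d < length u \<and> u!(d-1) > u!d"
  by (simp add: Des_def)

lemma Des_finite: "finite (Des u)"
  by (rule finite_subset[of _ "{..<length u}"]) (auto simp: Des_def)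

lemma descent_between:
  "i < j \<Longrightarrow> j < length u \<Longrightarrow> u!i > u!j \<Longrightarrow> \<exists>d\<in>Des u. i < d \<and> d \<le> j"
proof (induction j)
  case 0 thus ?case by simp
next
  case (Suc j)
  show ?case
  proof (cases "u!j > u!Suc j")
    case True thus ?thesis using Suc.prems by (auto simp: Des_def intro!: bexI[of _ "Suc j"])
  next
    case False
    hence "i \<noteq> j" using Suc.prems by auto
    hence "i < j" using Suc.prems by auto
    moreover have "u!i > u!j" using False Suc.prems by auto
    ultimately obtain d where "d \<in> Des u" "i < d" "d \<le> j" using Suc by auto
    thus ?thesis by auto
  qed
qed

definition Inv :: "nat list \<Rightarrow> (nat \<times> nat) set" where
  "Inv u = {(i, j). i < j \<and> j < length u \<and> u ! i > u ! j}"

lemma inv_count_Inv: "inv_count u = card (Inv u)"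
  by (simp add: inv_count_def Inv_def)

lemma Inv_finite: "finite (Inv u)"
  by (rule finite_subset[of _ "{..<length u} \<times> {..<length u}"]) (auto simp: Inv_def)

lemma Inv_swp:
  assumes k: "k \<in> Des u"
  shows "inv_count u = Suc (inv_count (swp u k))"
proof -
  have k1: "1 \<le> k" "k < length u" "u!(k-1) > u!k" using k by (auto simp: Des_def)
  let ?f = "\<lambda>(i,j). (tau k i, tau k j)"
  have "bij_betw ?f (Inv (swp u k)) (Inv u - {(k-1,k)})"
  proof (rule bij_betw_byWitness[where f'="?f"])
    show "\<forall>a\<in>Inv (swp u k). ?f (?f a) = a" using k1 by (auto simp: tau_tau)
    show "\<forall>a\<in>Inv u - {(k-1,k)}. ?f (?f a) = a" using k1 by (auto simp: tau_tau)
    show "?f ` Inv (swp u k) \<subseteq> Inv u - {(k - 1, k)}"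
    proof
      fix x assume "x \<in> ?f ` Inv (swp u k)"
      then obtain i j where ij: "(i,j) \<in> Inv (swp u k)" "x = (tau k i, tau k j)" by auto
      have ij2: "i < j" "j < length u" "u ! tau k i > u ! tau k j"
        using ij k1 by (auto simp: Inv_def swp_nth)
      have ne: "(i,j) \<noteq> (k-1,k)"
      proof
        assume "(i,j) = (k-1,k)"
        hence "tau k i = k" "tau k j = k - 1" using k1 by (auto simp: tau_def)
        thus False using ij2 k1 by auto
      qed
      have "tau k i < tau k j" using tau_mono[OF k1(1) ij2(1) ne] .
      moreover have "tau k j < length u" using tau_less k1 ij2 by auto
      moreover have "(tau k i, tau k j) \<noteq> (k-1,k)"
      proof
        assume "(tau k i, tau k j) = (k-1,k)"
        hence "tau k (tau k i) = tau k (k-1)" "tau k (tau k j) = tau k k" by auto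
        moreover have "tau k (k-1) = k" "tau k k = k - 1" by (auto simp: tau_def)
        ultimately have "i = k" "j = k - 1" using k1 by (simp_all add: tau_tau)
        thus False using ij2 by auto
      qed
      ultimately show "x \<in> Inv u - {(k-1,k)}" using ij ij2 by (auto simp: Inv_def)
    qed
    show "?f ` (Inv u - {(k - 1, k)}) \<subseteq> Inv (swp u k)"
    proof
      fix x assume "x \<in> ?f ` (Inv u - {(k-1,k)})"
      then obtain i j where ij: "(i,j) \<in> Inv u" "(i,j) \<noteq> (k-1,k)" "x = (tau k i, tau k j)" by auto
      have ij2: "i < j" "j < length u" "u ! i > u ! j" using ij by (auto simp: Inv_def)
      have "tau k i < tau k j" using tau_mono[OF k1(1) ij2(1) ij(2)] .
      moreover have "tau k j < length u" using tau_less k1 ij2 by auto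
      moreover have "tau k i < length u" using tau_less k1 ij2 by auto
      ultimately show "x \<in> Inv (swp u k)" using ij ij2 k1
        by (auto simp: Inv_def swp_nth tau_tau)
    qed
  qed
  hence "card (Inv (swp u k)) = card (Inv u - {(k-1,k)})" by (rule bij_betw_same_card)
  moreover have "(k-1,k) \<in> Inv u" using k1 by (auto simp: Inv_def)
  moreover have "card (Inv u - {(k-1,k)}) = card (Inv u) - 1"
    using calculation(2) Inv_finite[of u] by (simp add: card_Diff_singleton)
  moreover have "card (Inv u) > 0" using calculation(2) Inv_finite[of u] card_gt_0_iff by blast
  ultimately show ?thesis unfolding inv_count_Inv by linarith
qed

lemma Des_nonempty: "inv_count u > 0 \<Longrightarrow> Des u \<noteq> {}"
proof -
  assume "inv_count u > 0"
  hence "Inv u \<noteq> {}" by (auto simp: inv_count_Inv)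
  then obtain i j where "i < j" "j < length u" "u!i > u!j" by (auto simp: Inv_def)
  from descent_between[OF this] show ?thesis by auto
qed

lemma inv0_id: "is_perm n u \<Longrightarrow> inv_count u = 0 \<Longrightarrow> u = id_word n"
proof -
  assume p: "is_perm n u" and z: "inv_count u = 0"
  have "Inv u = {}" using z Inv_finite[of u] by (simp add: inv_count_Inv)
  have "sorted u" unfolding sorted_iff_nth_mono_less
  proof (intro allI impI)
    fix i j assume "i < j" "j < length u"
    hence "(i,j) \<notin> Inv u" using \<open>Inv u = {}\<close> by simp
    thus "u ! i \<le> u ! j" using \<open>i < j\<close> \<open>j < length u\<close> by (auto simp: Inv_def)
  qed
  moreover have "set [1..<n+1] = {1..n}" by auto
  moreover have "sorted [1..<n+1]" by (rule sorted_upt)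
  moreover have "distinct [1..<n+1]" by (rule distinct_upt)
  ultimately show ?thesis using p unfolding is_perm_def id_word_def
    by (metis sorted_distinct_set_unique)
qed

fun Vs :: "(nat set \<Rightarrow> nat) \<Rightarrow> nat list \<Rightarrow> nat \<Rightarrow> nat list" where
  "Vs sel u 0 = u"
| "Vs sel u (Suc m) = swp (Vs sel u m) (sel (Des (Vs sel u m)))"

lemma Vs_Suc': "Vs sel u (Suc m) = Vs sel (swp u (sel (Des u))) m"
  by (induction m) auto

lemma desc_seq_nth: "m < k \<Longrightarrow> desc_seq sel u k ! m = sel (Des (Vs sel u m))"
proof (induction k arbitrary: u m)
  case 0 thus ?case by simp
next
  case (Suc k)
  thus ?case by (cases m) (auto simp: Let_def Vs_Suc'[symmetric])
qed

lemma length_desc_seq[simp]: "length (desc_seq sel u k) = k"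
  by (induction k arbitrary: u) (auto simp: Let_def)

lemma swp_nth_k: "1 \<le> k \<Longrightarrow> k < length u \<Longrightarrow> swp u k ! (k-1) = u!k \<and> swp u k ! k = u!(k-1)"
  by (simp add: swp_def nth_list_update)

definition bef :: "nat list \<Rightarrow> nat \<Rightarrow> nat \<Rightarrow> bool" where
  "bef u p q \<longleftrightarrow> (\<exists>i j. i < j \<and> j < length u \<and> u!i = p \<and> u!j = q)"

lemma bef_swp:
  assumes "bef u p q" "{p,q} \<noteq> {u!(k-1), u!k}" "1 \<le> k" "k < length u"
  shows "bef (swp u k) p q"
proof -
  obtain i j where ij: "i < j" "j < length u" "u!i = p" "u!j = q" using assms(1) by (auto simp: bef_def)
  have ne: "(i,j) \<noteq> (k-1,k)" using ij assms(2) by auto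
  have "tau k i < tau k j" using tau_mono[OF assms(3) ij(1) ne] .
  moreover have "tau k j < length u" "tau k i < length u" using tau_less assms ij by auto
  ultimately show ?thesis unfolding bef_def using ij assms
    by (intro exI[of _ "tau k i"] exI[of _ "tau k j"]) (auto simp: swp_nth tau_tau)
qed

lemma bef_swp_iff:
  assumes "{p,q} \<noteq> {u!(k-1), u!k}" "1 \<le> k" "k < length u"
  shows "bef (swp u k) p q = bef u p q"
proof
  assume "bef u p q" thus "bef (swp u k) p q" using bef_swp assms by auto
next
  assume b: "bef (swp u k) p q"
  have "{(swp u k)!(k-1), (swp u k)!k} = {u!(k-1), u!k}" using assms
    by (auto simp: swp_nth tau_def)
  hence "bef (swp (swp u k) k) p q" using bef_swp[OF b] assms by auto
  thus "bef u p q" using swp_swp assms by simp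
qed

lemma bef_asym: "distinct u \<Longrightarrow> bef u p q \<Longrightarrow> \<not> bef u q p"
proof
  assume d: "distinct u" and "bef u p q" "bef u q p"
  then obtain i j i' j' where "i < j" "j < length u" "u!i = p" "u!j = q"
     "i' < j'" "j' < length u" "u!i' = q" "u!j' = p" unfolding bef_def by blast
  moreover have "i = j'" using calculation d by (metis nth_eq_iff_index_eq order.strict_trans)
  moreover have "j = i'" using calculation d by (metis nth_eq_iff_index_eq order.strict_trans)
  ultimately show False by simp
qed

lemma pair_eq: "(a::nat) > b \<Longrightarrow> p > q \<Longrightarrow> {a,b} = {p,q} \<Longrightarrow> a = p \<and> b = q"
  by (auto simp: doubleton_eq_iff)

lemma bef_mono_step:
  assumes "distinct u" "k \<in> Des u" "p > q" "\<not> bef u p q"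
  shows "\<not> bef (swp u k) p q"
proof (cases "{p,q} = {u!(k-1), u!k}")
  case True
  have "u!(k-1) = p" "u!k = q" using pair_eq[OF _ assms(3) True[symmetric]] assms(2) by (auto simp: Des_def)
  hence "bef u p q" using assms(2) unfolding bef_def Des_def
    by (intro exI[of _ "k-1"] exI[of _ k]) auto
  thus ?thesis using assms by simp
next
  case False thus ?thesis using bef_swp_iff assms by (auto simp: Des_def)
qed

lemma bef_swap_step:
  assumes "distinct u" "k \<in> Des u" "p > q" "{p,q} = {u!(k-1), u!k}"
  shows "bef u p q" "\<not> bef (swp u k) p q" "u!(k-1) = p" "u!k = q"
proof -
  show e: "u!(k-1) = p" "u!k = q" using pair_eq[OF _ assms(3) assms(4)[symmetric]] assms(2) by (auto simp: Des_def)
  show "bef u p q" using assms(2) e unfolding bef_def Des_def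
    by (intro exI[of _ "k-1"] exI[of _ k]) auto
  have k1: "1 \<le> k" "k < length u" using assms(2) by (auto simp: Des_def)
  have "bef (swp u k) q p" using k1 e unfolding bef_def
    by (intro exI[of _ "k-1"] exI[of _ k]) (auto simp: swp_nth tau_def)
  moreover have "distinct (swp u k)"
    using assms(1) k1 by (metis swp_mset mset_eq_imp_distinct_iff)
  ultimately show "\<not> bef (swp u k) p q" using bef_asym by blast
qed

locale srt =
  fixes sel :: "nat set \<Rightarrow> nat" and n :: nat and w :: "nat list"
  assumes sel_in: "\<And>D. finite D \<Longrightarrow> D \<noteq> {} \<Longrightarrow> sel D \<in> D"
  and perm: "is_perm n w"
begin

abbreviation "L \<equiv> inv_count w"
abbreviation "V \<equiv> Vs sel w"
definition "kk m = sel (Des (V m))"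
abbreviation "a \<equiv> rev (desc_seq sel w L)"

lemma inv_V: "m \<le> L \<Longrightarrow> is_perm n (V m) \<and> inv_count (V m) + m = L"
proof (induction m)
  case 0 thus ?case using perm by simp
next
  case (Suc m)
  hence ih: "is_perm n (V m)" "inv_count (V m) + m = L" by auto
  have "inv_count (V m) > 0" using ih Suc.prems by auto
  hence "Des (V m) \<noteq> {}" by (rule Des_nonempty)
  hence kD: "sel (Des (V m)) \<in> Des (V m)" using sel_in Des_finite by blast
  show ?case using ih swp_perm[OF ih(1)] kD Inv_swp[OF kD] by (auto simp: Des_def)
qed

lemma kk_Des: "m < L \<Longrightarrow> kk m \<in> Des (V m)"
proof -
  assume m: "m < L"
  hence "inv_count (V m) > 0" using inv_V[of m] by auto
  hence "Des (V m) \<noteq> {}" by (rule Des_nonempty)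
  thus ?thesis using sel_in Des_finite unfolding kk_def by blast
qed

lemma V_Suc: "V (Suc m) = swp (V m) (kk m)" by (simp add: kk_def)

lemma V_dist: "m \<le> L \<Longrightarrow> distinct (V m)" using inv_V by (auto simp: is_perm_def)
lemma V_len: "m \<le> L \<Longrightarrow> length (V m) = n" using inv_V by (auto simp: is_perm_def)

lemma V_L: "V L = id_word n"
  using inv_V[of L] inv0_id by auto

lemma act_take: "m \<le> L \<Longrightarrow> act (take m a) (id_word n) = V (L - m)"
proof (induction m)
  case 0 thus ?case using V_L by (simp add: act_def)
next
  case (Suc m)
  have ml: "m < length a" using Suc.prems by simp
  have am: "a ! m = kk (L - Suc m)"
    using Suc.prems by (simp add: rev_nth desc_seq_nth kk_def)
  have eq: "L - m = Suc (L - Suc m)" using Suc.prems by simp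
  have kD: "kk (L - Suc m) \<in> Des (V (L - Suc m))" using kk_Des Suc.prems by simp
  have "act (take (Suc m) a) (id_word n) = swp (act (take m a) (id_word n)) (a ! m)"
    unfolding act_def take_Suc_conv_app_nth[OF ml] by (simp only: foldl_append foldl_Cons foldl_Nil)
  also have "\<dots> = swp (swp (V (L - Suc m)) (kk (L - Suc m))) (kk (L - Suc m))"
  proof -
    have "act (take m a) (id_word n) = V (L - m)" using Suc by simp
    also have "\<dots> = swp (V (L - Suc m)) (kk (L - Suc m))" unfolding eq by (rule V_Suc)
    finally show ?thesis by (simp only: am)
  qed
  also have "\<dots> = V (L - Suc m)" using kD by (intro swp_swp) (auto simp: Des_def)
  finally show ?case .
qed

definition "pair m = {V m ! (kk m - 1), V m ! kk m}"

lemma P_cond: "1 \<le> j \<Longrightarrow> j \<le> L \<Longrightarrow>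
  (let u = act (take (j - 1) a) (id_word n); k = a ! (j - 1) in {u ! (k - 1), u ! k} = {p, q})
  \<longleftrightarrow> pair (L - j) = {p,q}"
proof -
  assume j: "1 \<le> j" "j \<le> L"
  have u: "act (take (j - 1) a) (id_word n) = swp (V (L - j)) (kk (L - j))"
  proof -
    have "L - (j-1) = Suc (L-j)" using j by simp
    moreover have "act (take (j - 1) a) (id_word n) = V (L - (j-1))" using j by (intro act_take) simp
    ultimately show ?thesis using V_Suc[of "L-j"] by simp
  qed
  have k: "a ! (j-1) = kk (L - j)" using j by (simp add: rev_nth desc_seq_nth kk_def)
  have kD: "kk (L - j) \<in> Des (V (L - j))" using kk_Des j by simp
  let ?u = "V (L - j)" let ?k = "kk (L - j)"
  have k1: "1 \<le> ?k" "?k < length ?u" using kD by (auto simp: Des_def)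
  have e: "swp ?u ?k ! (?k - 1) = ?u ! ?k" "swp ?u ?k ! ?k = ?u ! (?k - 1)"
    using swp_nth_k[OF k1] by auto
  have "{?u ! ?k, ?u ! (?k - 1)} = {?u ! (?k - 1), ?u ! ?k}" by (rule insert_commute)
  have "(let u = act (take (j - 1) a) (id_word n); k = a ! (j - 1) in {u ! (k - 1), u ! k} = {p, q})
     \<longleftrightarrow> {swp ?u ?k ! (?k - 1), swp ?u ?k ! ?k} = {p,q}" unfolding u k Let_def by (rule refl)
  also have "\<dots> \<longleftrightarrow> pair (L - j) = {p,q}" unfolding e pair_def using \<open>{?u ! ?k, ?u ! (?k - 1)} = _\<close> by (rule arg_cong)
  finally show ?thesis .
qed

lemma P_val:
  assumes "s < L" "pair s = {p,q}" "\<And>s'. s' < L \<Longrightarrow> pair s' = {p,q} \<Longrightarrow> s' = s"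
  shows "P n a p q = L - s"
  unfolding P_def
proof (rule Least_equality)
  have j: "1 \<le> L - s" "L - s \<le> L" using assms(1) by auto
  have la: "L - s \<le> length a" by simp
  have ps: "pair (L - (L - s)) = {p,q}" using assms(1,2) by simp
  have c: "(let u = act (take (L - s - 1) a) (id_word n); k = a ! (L - s - 1) in {u ! (k - 1), u ! k} = {p, q})"
    by (rule iffD2[OF P_cond[OF j] ps])
  show "1 \<le> L - s \<and> L - s \<le> length a \<and> (let u = act (take (L - s - 1) a) (id_word n); k = a ! (L - s - 1) in {u ! (k - 1), u ! k} = {p, q})"
    by (intro conjI j(1) la c)
next
  fix y assume H: "1 \<le> y \<and> y \<le> length a \<and> (let u = act (take (y - 1) a) (id_word n); k = a ! (y - 1) in {u ! (k - 1), u ! k} = {p, q})"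
  have y1: "1 \<le> y" using H by (rule conjunct1)
  have y2: "y \<le> L" using conjunct1[OF conjunct2[OF H]] by simp
  have "pair (L - y) = {p,q}" by (rule iffD1[OF P_cond[OF y1 y2] conjunct2[OF conjunct2[OF H]]])
  hence "L - y = s" using assms(3) y1 y2 by auto
  thus "L - s \<le> y" by simp
qed

lemma mono_many0: "p > q \<Longrightarrow> \<not> bef (V s) p q \<Longrightarrow> s + d \<le> L \<Longrightarrow> \<not> bef (V (s + d)) p q"
proof (induction d)
  case 0 thus ?case by simp
next
  case (Suc d)
  hence "\<not> bef (V (s + d)) p q" by simp
  from bef_mono_step[OF V_dist kk_Des Suc.prems(1) this] Suc.prems(3)
  show ?case using V_Suc[of "s+d"] by simp
qed

lemma mono_many: "p > q \<Longrightarrow> \<not> bef (V s) p q \<Longrightarrow> s \<le> t \<Longrightarrow> t \<le> L \<Longrightarrow> \<not> bef (V t) p q"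
  using mono_many0[of q p s "t - s"] by simp

lemma swap_time:
  assumes "p > q" "bef w p q"
  shows "\<exists>s<L. pair s = {p,q} \<and> (\<forall>s'<L. pair s' = {p,q} \<longrightarrow> s' = s)
     \<and> (\<forall>t\<le>L. bef (V t) p q \<longleftrightarrow> t \<le> s)"
proof -
  have nL: "\<not> bef (V L) p q" using assms(1) V_L
    by (auto simp: bef_def id_word_def simp del: upt_Suc)
  define m where "m = (LEAST m. \<not> bef (V m) p q)"
  have m1: "\<not> bef (V m) p q" unfolding m_def using nL by (rule LeastI)
  have mL: "m \<le> L" unfolding m_def using nL by (rule Least_le)
  have m0: "m \<noteq> 0"
  proof
    assume "m = 0" hence "V m = w" by simp
    thus False using m1 assms by simp
  qed
  then obtain s where s: "m = Suc s" by (cases m) auto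
  have bs: "bef (V s) p q" using not_less_Least[of s "\<lambda>m. \<not> bef (V m) p q"] s m_def by auto
  have sL: "s < L" using mL s by simp
  have ps: "pair s = {p,q}"
  proof (rule ccontr)
    assume "pair s \<noteq> {p,q}"
    hence ne: "{p,q} \<noteq> {V s ! (kk s - 1), V s ! kk s}" unfolding pair_def by metis
    have k1: "1 \<le> kk s" "kk s < length (V s)" using kk_Des[OF sL] by (auto simp: Des_def)
    have "bef (V (Suc s)) p q" unfolding V_Suc using bef_swp_iff[OF ne k1] bs by simp
    thus False using m1 s by simp
  qed
  have all: "\<forall>t\<le>L. bef (V t) p q \<longleftrightarrow> t \<le> s"
  proof (intro allI impI)
    fix t assume tL: "t \<le> L"
    show "bef (V t) p q \<longleftrightarrow> t \<le> s"
    proof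
      assume b: "bef (V t) p q"
      show "t \<le> s"
      proof (rule ccontr)
        assume "\<not> t \<le> s"
        hence "m \<le> t" using s by simp
        thus False using mono_many[OF assms(1) m1 _ tL] b by simp
      qed
    next
      assume "t \<le> s"
      thus "bef (V t) p q" using not_less_Least[of t "\<lambda>m. \<not> bef (V m) p q"] s m_def by auto
    qed
  qed
  have uniq: "\<forall>s'<L. pair s' = {p,q} \<longrightarrow> s' = s"
  proof (intro allI impI)
    fix s' assume s': "s' < L" "pair s' = {p,q}"
    have "bef (V s') p q" "\<not> bef (V (Suc s')) p q"
      using bef_swap_step[OF V_dist kk_Des[OF s'(1)] assms(1)] s' V_Suc by (auto simp: pair_def)
    thus "s' = s" using all[rule_format, of s'] all[rule_format, of "Suc s'"] s' by auto
  qed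
  show ?thesis using sL ps uniq all by blast
qed

end

lemma T_bef: "(x,y,z) \<in> T w \<Longrightarrow> x < y \<and> y < z \<and> bef w z y \<and> bef w y x"
proof -
  assume "(x,y,z) \<in> T w"
  hence "x < y \<and> y < z \<and> (\<exists>i j k. i < j \<and> j < k \<and> k < length w \<and> w ! i = z \<and> w ! j = y \<and> w ! k = x)"
    unfolding T_def by simp
  then obtain i j k where "x < y" "y < z" and h: "i < j" "j < k" "k < length w" "w ! i = z" "w ! j = y" "w ! k = x"
    by (elim conjE exE) (rule that)
  have "bef w z y" unfolding bef_def using h by (intro exI[of _ i] exI[of _ j]) simp
  moreover have "bef w y x" unfolding bef_def using h by (intro exI[of _ j] exI[of _ k]) simp
  ultimately show ?thesis using \<open>x < y\<close> \<open>y < z\<close> by simp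
qed

theorem mainTheorem5:
  fixes n :: nat and w :: "nat list"
  assumes "is_perm n w"
  shows "\<forall>t \<in> T w. Gamma n (a_min w) t = 0 \<and> Gamma n (a_max w) t = 1"
proof
  fix t assume tT: "t \<in> T w"
  obtain x y z where t: "t = (x,y,z)" by (cases t)
  have xyz: "x < y" "y < z" "bef w z y" "bef w y x" using T_bef tT t by auto
  interpret mn: srt Min n w using assms by unfold_locales auto
  interpret mx: srt Max n w using assms by unfold_locales auto
  have g0: "Gamma n (a_min w) t = 0"
  proof -
    obtain s1 where s1: "s1 < mn.L" "mn.pair s1 = {y,x}" "\<forall>s'<mn.L. mn.pair s' = {y,x} \<longrightarrow> s' = s1"
      "\<forall>t\<le>mn.L. bef (mn.V t) y x \<longleftrightarrow> t \<le> s1"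
      using mn.swap_time[OF xyz(1) xyz(4)] by (elim exE conjE) (rule that)
    obtain s2 where s2: "s2 < mn.L" "mn.pair s2 = {z,y}" "\<forall>s'<mn.L. mn.pair s' = {z,y} \<longrightarrow> s' = s2"
      "\<forall>t\<le>mn.L. bef (mn.V t) z y \<longleftrightarrow> t \<le> s2"
      using mn.swap_time[OF xyz(2) xyz(3)] by (elim exE conjE) (rule that)
    let ?u = "mn.V s1" let ?k = "mn.kk s1"
    have kD: "?k \<in> Des ?u" by (rule mn.kk_Des[OF s1(1)])
    have dist: "distinct ?u" using s1(1) by (intro mn.V_dist) simp
    have pr: "{y,x} = {?u!(?k-1), ?u!?k}" using s1(2) unfolding mn.pair_def by (rule sym)
    have e: "?u!(?k-1) = y" "?u!?k = x"
      using bef_swap_step(3,4)[OF dist kD xyz(1) pr] by auto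
    have "\<not> bef ?u z y"
    proof
      assume "bef ?u z y"
      then obtain i j where ij: "i < j" "j < length ?u" "?u!i = z" "?u!j = y" unfolding bef_def by blast
      have kl: "?k - 1 < length ?u" using kD by (auto simp: Des_def)
      have "?u!j = ?u!(?k-1)" using ij(4) e(1) by simp
      hence "j = ?k - 1" using nth_eq_iff_index_eq[OF dist ij(2) kl] by simp
      moreover have "?u!i > ?u!j" using ij xyz by simp
      ultimately obtain d where d: "d \<in> Des ?u" "d \<le> ?k - 1" using descent_between[of i j ?u] ij by auto
      have "?k \<le> d" unfolding mn.kk_def by (rule Min_le[OF Des_finite d(1)])
      thus False using d kD by (auto simp: Des_def)
    qed
    moreover have "s1 \<le> mn.L" using s1(1) by simp
    ultimately have "\<not> s1 \<le> s2" using s2(4)[rule_format, of s1] by simp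
    hence "s2 < s1" by simp
    hence "\<not> (mn.L - s2 < mn.L - s1)" by simp
    moreover have "P n (a_min w) y x = mn.L - s1" unfolding a_min_def
      by (rule mn.P_val[OF s1(1,2)]) (erule s1(3)[rule_format])
    moreover have "P n (a_min w) z y = mn.L - s2" unfolding a_min_def
      by (rule mn.P_val[OF s2(1,2)]) (erule s2(3)[rule_format])
    ultimately show ?thesis by (simp add: Gamma_def t)
  qed
  have g1: "Gamma n (a_max w) t = 1"
  proof -
    obtain s1 where s1: "s1 < mx.L" "mx.pair s1 = {y,x}" "\<forall>s'<mx.L. mx.pair s' = {y,x} \<longrightarrow> s' = s1"
      "\<forall>t\<le>mx.L. bef (mx.V t) y x \<longleftrightarrow> t \<le> s1"
      using mx.swap_time[OF xyz(1) xyz(4)] by (elim exE conjE) (rule that)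
    obtain s2 where s2: "s2 < mx.L" "mx.pair s2 = {z,y}" "\<forall>s'<mx.L. mx.pair s' = {z,y} \<longrightarrow> s' = s2"
      "\<forall>t\<le>mx.L. bef (mx.V t) z y \<longleftrightarrow> t \<le> s2"
      using mx.swap_time[OF xyz(2) xyz(3)] by (elim exE conjE) (rule that)
    let ?u = "mx.V s2" let ?k = "mx.kk s2"
    have kD: "?k \<in> Des ?u" by (rule mx.kk_Des[OF s2(1)])
    have dist: "distinct ?u" using s2(1) by (intro mx.V_dist) simp
    have pr: "{z,y} = {?u!(?k-1), ?u!?k}" using s2(2) unfolding mx.pair_def by (rule sym)
    have e: "?u!(?k-1) = z" "?u!?k = y"
      using bef_swap_step(3,4)[OF dist kD xyz(2) pr] by auto
    have "\<not> bef ?u y x"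
    proof
      assume "bef ?u y x"
      then obtain i j where ij: "i < j" "j < length ?u" "?u!i = y" "?u!j = x" unfolding bef_def by blast
      have kl: "?k < length ?u" using kD by (auto simp: Des_def)
      have il: "i < length ?u" using ij by simp
      have "?u!i = ?u!?k" using ij(3) e(2) by simp
      hence "i = ?k" using nth_eq_iff_index_eq[OF dist il kl] by simp
      moreover have "?u!i > ?u!j" using ij xyz by simp
      ultimately obtain d where d: "d \<in> Des ?u" "?k < d" using descent_between[of i j ?u] ij by auto
      have "d \<le> ?k" unfolding mx.kk_def by (rule Max_ge[OF Des_finite d(1)])
      thus False using d by simp
    qed
    moreover have "s2 \<le> mx.L" using s2(1) by simp
    ultimately have "\<not> s2 \<le> s1" using s1(4)[rule_format, of s2] by simp
    hence "s1 < s2" by simp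
    hence "mx.L - s2 < mx.L - s1" using s2(1) by simp
    moreover have "P n (a_max w) y x = mx.L - s1" unfolding a_max_def
      by (rule mx.P_val[OF s1(1,2)]) (erule s1(3)[rule_format])
    moreover have "P n (a_max w) z y = mx.L - s2" unfolding a_max_def
      by (rule mx.P_val[OF s2(1,2)]) (erule s2(3)[rule_format])
    ultimately show ?thesis by (simp add: Gamma_def t)
  qed
  show "Gamma n (a_min w) t = 0 \<and> Gamma n (a_max w) t = 1" using g0 g1 by simp
qed

end
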